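(* Let $T$ be a causal theory with explainable symbols $\mathbf{p}$ all of whose rules are D-rules, let $\Pi$ be the conjunction of $\mathrm{tr}_d[R]$ over all rules $R$ of $T$, and let $CC$ be the conjunction of the completeness constraints for $\mathbf{p}$. Then $T\land CC\models\mathrm{SM}_{\mathbf{p}\widehat{\mathbf{p}}}[\Pi\land CC]$.
   Context: A causal theory $T$ consists of a list $\mathbf{p}$ of distinct predicate constants (explainable symbols, not equality) and a finite set of causal rules $F\Leftarrow G$. With predicate variables $u_p$ ($p\in\mathbf{p}$), list $\mathbf{u}$, $T^\dagger(\mathbf{u})$ is the conjunction of $\forall\mathbf{x}(G\to F^{\mathbf{p}}_{\mathbf{u}})$ over the rules ($\mathbf{x}$ the free variables, $F^{\mathbf{p}}_{\mathbf{u}}$ replaces each $p$ by $u_p$), and $T$ is identified with the sentence $\forall\mathbf{u}(T^\dagger(\mathbf{u})\leftrightarrow(\mathbf{u}=\mathbf{p}))$, where $\mathbf{u}=\mathbf{p}$ is $\bigwedge_p\forall\mathbf{x}(u_p(\mathbf{x})\leftrightarrow p(\mathbf{x}))$. A D-rule has the form $\bigvee_{A\in Pos}A\lor\bigvee_{A\in Neg}\neg A\Leftarrow G$ with $Pos,Neg$ finite sets of atoms with predicates in $\mathbf{p}$ and $G$ without $\to$. For $p\in\mathbf{p}$, $\widehat p$ is a new predicate constant of the same arity; for $A=p(\mathbf{t})$, $\widehat A=\widehat p(\mathbf{t})$. $\mathrm{tr}_d$ of the D-rule is $\widetilde\forall\big(\neg\neg G\land\bigwedge_{A\in Pos}(\widehat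 A\lor\neg\widehat A)\land\bigwedge_{A\in Neg}(A\lor\neg A)\to\bigvee_{A\in Pos}A\lor\bigvee_{A\in Neg}\widehat A\big)$ ($\widetilde\forall$ = universal closure). $CC$ is the conjunction over $p\in\mathbf{p}$ of $\forall\mathbf{x}\neg(p(\mathbf{x})\land\widehat p(\mathbf{x}))$ and $\forall\mathbf{x}\neg(\neg p(\mathbf{x})\land\neg\widehat p(\mathbf{x}))$. For a logic program $F$ (conjunction of sentences $\widetilde\forall(F_1\to F_2)$ with no other $\to$), $\mathrm{SM}_{\mathbf{p}\widehat{\mathbf{p}}}[F]$ is $F\land\neg\exists\mathbf{u}\widehat{\mathbf{u}}\big(((\mathbf{u},\widehat{\mathbf{u}})<(\mathbf{p},\widehat{\mathbf{p}}))\land F^\diamond(\mathbf{u},\widehat{\mathbf{u}})\big)$, where $\widehat{\mathbf{u}}=(\widehat u_p)$ are further predicate variables, $F^\diamond$ replaces each occurrence of $p$ / $\widehat p$ not in the scope of $\neg$ by $u_p$ / $\widehat u_p$, $p\le q$ is $\forall\mathbf{x}(p(\mathbf{x})\to q(\mathbf{x}))$ (componentwise for tuples) and $\mathbf{a}<\mathbf{b}$ is $(\mathbf{a}\le\mathbf{b})\land\neg(\mathbf{b}\le\mathbf{a})$. $\models$ is classical (second-order) entailment. *)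

theory Defs
  imports Main
begin

datatype 'f trm = Var nat | Fn 'f "'f trm list"

datatype ('f, 'r) fm =
    Bot
  | Atom 'r "'f trm list"
  | Eq "'f trm" "'f trm"
  | Neg "('f, 'r) fm"
  | Conj "('f, 'r) fm" "('f, 'r) fm"
  | Disj "('f, 'r) fm" "('f, 'r) fm"
  | Imp "('f, 'r) fm" "('f, 'r) fm"
  | Forall nat "('f, 'r) fm"
  | Exists nat "('f, 'r) fm"

primrec fv_trm :: "'f trm \<Rightarrow> nat set" where
  "fv_trm (Var x) = {x}"
| "fv_trm (Fn f ts) = \<Union> (set (map fv_trm ts))"

primrec fv :: "('f, 'r) fm \<Rightarrow> nat set" where
  "fv Bot = {}"
| "fv (Atom r ts) = \<Union> (set (map fv_trm ts))"
| "fv (Eq s t) = fv_trm s \<union> fv_trm t"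
| "fv (Neg F) = fv F"
| "fv (Conj F G) = fv F \<union> fv G"
| "fv (Disj F G) = fv F \<union> fv G"
| "fv (Imp F G) = fv F \<union> fv G"
| "fv (Forall x F) = fv F - {x}"
| "fv (Exists x F) = fv F - {x}"

primrec rename_pred :: "('r \<Rightarrow> 's) \<Rightarrow> ('f, 'r) fm \<Rightarrow> ('f, 's) fm" where
  "rename_pred g Bot = Bot"
| "rename_pred g (Atom r ts) = Atom (g r) ts"
| "rename_pred g (Eq s t) = Eq s t"
| "rename_pred g (Neg F) = Neg (rename_pred g F)"
| "rename_pred g (Conj F G) = Conj (rename_pred g F) (rename_pred g G)"
| "rename_pred g (Disj F G) = Disj (rename_pred g F) (rename_pred g G)"
| "rename_pred g (Imp F G) = Imp (rename_pred g F) (rename_pred g G)"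
| "rename_pred g (Forall x F) = Forall x (rename_pred g F)"
| "rename_pred g (Exists x F) = Exists x (rename_pred g F)"

primrec no_imp :: "('f, 'r) fm \<Rightarrow> bool" where
  "no_imp Bot = True"
| "no_imp (Atom r ts) = True"
| "no_imp (Eq s t) = True"
| "no_imp (Neg F) = no_imp F"
| "no_imp (Conj F G) = (no_imp F \<and> no_imp G)"
| "no_imp (Disj F G) = (no_imp F \<and> no_imp G)"
| "no_imp (Imp F G) = False"
| "no_imp (Forall x F) = no_imp F"
| "no_imp (Exists x F) = no_imp F"

fun conjs :: "('f, 'r) fm list \<Rightarrow> ('f, 'r) fm" where
  "conjs [] = Neg Bot"
| "conjs [F] = F"
| "conjs (F # Fs) = Conj F (conjs Fs)"

fun disjs :: "('f, 'r) fm list \<Rightarrow> ('f, 'r) fm" where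
  "disjs [] = Bot"
| "disjs [F] = F"
| "disjs (F # Fs) = Disj F (disjs Fs)"

definition foralls :: "nat list \<Rightarrow> ('f, 'r) fm \<Rightarrow> ('f, 'r) fm" where
  "foralls xs F = foldr Forall xs F"

definition ucl :: "('f, 'r) fm \<Rightarrow> ('f, 'r) fm" where
  "ucl F = foralls (sorted_list_of_set (fv F)) F"

text \<open>A structure: universe = the type 'a, function interpretation Fi,
  predicate interpretation I (relations as predicates on argument lists);
  sigma is a variable assignment.\<close>

primrec teval :: "('f \<Rightarrow> 'a list \<Rightarrow> 'a) \<Rightarrow> (nat \<Rightarrow> 'a) \<Rightarrow> 'f trm \<Rightarrow> 'a" where
  "teval Fi \<sigma> (Var x) = \<sigma> x"
| "teval Fi \<sigma> (Fn f ts) = Fi f (map (teval Fi \<sigma>) ts)"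

primrec eval :: "('f \<Rightarrow> 'a list \<Rightarrow> 'a) \<Rightarrow> ('r \<Rightarrow> 'a list \<Rightarrow> bool) \<Rightarrow> (nat \<Rightarrow> 'a)
    \<Rightarrow> ('f, 'r) fm \<Rightarrow> bool" where
  "eval Fi I \<sigma> Bot = False"
| "eval Fi I \<sigma> (Atom r ts) = I r (map (teval Fi \<sigma>) ts)"
| "eval Fi I \<sigma> (Eq s t) = (teval Fi \<sigma> s = teval Fi \<sigma> t)"
| "eval Fi I \<sigma> (Neg F) = (\<not> eval Fi I \<sigma> F)"
| "eval Fi I \<sigma> (Conj F G) = (eval Fi I \<sigma> F \<and> eval Fi I \<sigma> G)"
| "eval Fi I \<sigma> (Disj F G) = (eval Fi I \<sigma> F \<or> eval Fi I \<sigma> G)"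
| "eval Fi I \<sigma> (Imp F G) = (eval Fi I \<sigma> F \<longrightarrow> eval Fi I \<sigma> G)"
| "eval Fi I \<sigma> (Forall x F) = (\<forall>d. eval Fi I (\<sigma>(x := d)) F)"
| "eval Fi I \<sigma> (Exists x F) = (\<exists>d. eval Fi I (\<sigma>(x := d)) F)"

definition pred_le :: "('r \<Rightarrow> nat) \<Rightarrow> 'r set \<Rightarrow> ('r \<Rightarrow> 'a list \<Rightarrow> bool)
    \<Rightarrow> ('r \<Rightarrow> 'a list \<Rightarrow> bool) \<Rightarrow> bool" where
  "pred_le ar S U V = (\<forall>r\<in>S. \<forall>xs. length xs = ar r \<longrightarrow> U r xs \<longrightarrow> V r xs)"

definition pred_less :: "('r \<Rightarrow> nat) \<Rightarrow> 'r set \<Rightarrow> ('r \<Rightarrow> 'a list \<Rightarrow> bool)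
    \<Rightarrow> ('r \<Rightarrow> 'a list \<Rightarrow> bool) \<Rightarrow> bool" where
  "pred_less ar S U V = (pred_le ar S U V \<and> \<not> pred_le ar S V U)"

definition pred_eq :: "('r \<Rightarrow> nat) \<Rightarrow> 'r set \<Rightarrow> ('r \<Rightarrow> 'a list \<Rightarrow> bool)
    \<Rightarrow> ('r \<Rightarrow> 'a list \<Rightarrow> bool) \<Rightarrow> bool" where
  "pred_eq ar S U V = (\<forall>r\<in>S. \<forall>xs. length xs = ar r \<longrightarrow> (U r xs \<longleftrightarrow> V r xs))"

text \<open>A causal rule F \<Leftarrow> G is the pair (F, G).  Predicate variables u_p are represented by
  the symbols Inr p (original constants are Inl r).\<close>
type_synonym ('f, 'p) crule = "('f, 'p) fm \<times> ('f, 'p) fm"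

definition Tdag :: "'p list \<Rightarrow> ('f, 'p) crule list \<Rightarrow> ('f, 'p + 'p) fm" where
  "Tdag ps R = conjs (map (\<lambda>(F, G). ucl (Imp (rename_pred Inl G)
       (rename_pred (\<lambda>r. if r \<in> set ps then Inr r else Inl r) F))) R)"

definition causal_holds :: "('p \<Rightarrow> nat) \<Rightarrow> 'p list \<Rightarrow> ('f, 'p) crule list
    \<Rightarrow> ('f \<Rightarrow> 'a list \<Rightarrow> 'a) \<Rightarrow> ('p \<Rightarrow> 'a list \<Rightarrow> bool) \<Rightarrow> (nat \<Rightarrow> 'a) \<Rightarrow> bool" where
  "causal_holds ar ps R Fi I \<sigma> =
     (\<forall>U. eval Fi (case_sum I U) \<sigma> (Tdag ps R) \<longleftrightarrow> pred_eq ar (set ps) U I)"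

text \<open>D-rules: (Pos, Neg, G); atoms are pairs (predicate, argument terms).\<close>
type_synonym ('f, 'p) atm = "'p \<times> 'f trm list"
type_synonym ('f, 'p) drule = "('f, 'p) atm list \<times> ('f, 'p) atm list \<times> ('f, 'p) fm"

definition atom_fm :: "('f, 'p) atm \<Rightarrow> ('f, 'p) fm" where
  "atom_fm a = Atom (fst a) (snd a)"

definition drule_crule :: "('f, 'p) drule \<Rightarrow> ('f, 'p) crule" where
  "drule_crule = (\<lambda>(Pos, Ng, G). (disjs (map atom_fm Pos @ map (\<lambda>a. Neg (atom_fm a)) Ng), G))"

definition is_drule :: "'p list \<Rightarrow> ('p \<Rightarrow> nat) \<Rightarrow> ('f, 'p) drule \<Rightarrow> bool" where
  "is_drule ps ar = (\<lambda>(Pos, Ng, G). no_imp G \<and>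
      (\<forall>a \<in> set Pos \<union> set Ng. fst a \<in> set ps \<and> length (snd a) = ar (fst a)))"

datatype 'p hsym = Orig 'p | Hat 'p

definition har :: "('p \<Rightarrow> nat) \<Rightarrow> 'p hsym \<Rightarrow> nat" where
  "har ar = case_hsym ar ar"

definition oatm :: "('f, 'p) atm \<Rightarrow> ('f, 'p hsym) fm" where
  "oatm a = Atom (Orig (fst a)) (snd a)"

definition hatm :: "('f, 'p) atm \<Rightarrow> ('f, 'p hsym) fm" where
  "hatm a = Atom (Hat (fst a)) (snd a)"

definition tr_d :: "('f, 'p) drule \<Rightarrow> ('f, 'p hsym) fm" where
  "tr_d = (\<lambda>(Pos, Ng, G). ucl (Imp
      (conjs ([Neg (Neg (rename_pred Orig G))]
              @ map (\<lambda>a. Disj (hatm a) (Neg (hatm a))) Pos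
              @ map (\<lambda>a. Disj (oatm a) (Neg (oatm a))) Ng))
      (disjs (map oatm Pos @ map hatm Ng))))"

definition Pi :: "('f, 'p) drule list \<Rightarrow> ('f, 'p hsym) fm" where
  "Pi R = conjs (map tr_d R)"

definition cc_pred :: "('p \<Rightarrow> nat) \<Rightarrow> 'p \<Rightarrow> ('f, 'p hsym) fm" where
  "cc_pred ar p = (let xs = map Var [0..<ar p] in
     Conj (foralls [0..<ar p] (Neg (Conj (Atom (Orig p) xs) (Atom (Hat p) xs))))
          (foralls [0..<ar p] (Neg (Conj (Neg (Atom (Orig p) xs)) (Neg (Atom (Hat p) xs))))))"

definition CC :: "('p \<Rightarrow> nat) \<Rightarrow> 'p list \<Rightarrow> ('f, 'p hsym) fm" where
  "CC ar ps = conjs (map (cc_pred ar) ps)"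

primrec dia :: "'r set \<Rightarrow> ('f, 'r) fm \<Rightarrow> ('f, 'r + 'r) fm" where
  "dia S Bot = Bot"
| "dia S (Atom r ts) = Atom (if r \<in> S then Inr r else Inl r) ts"
| "dia S (Eq s t) = Eq s t"
| "dia S (Neg F) = Neg (rename_pred Inl F)"
| "dia S (Conj F G) = Conj (dia S F) (dia S G)"
| "dia S (Disj F G) = Disj (dia S F) (dia S G)"
| "dia S (Imp F G) = Imp (dia S F) (dia S G)"
| "dia S (Forall x F) = Forall x (dia S F)"
| "dia S (Exists x F) = Exists x (dia S F)"

definition SM_holds :: "('r \<Rightarrow> nat) \<Rightarrow> 'r set \<Rightarrow> ('f \<Rightarrow> 'a list \<Rightarrow> 'a)
    \<Rightarrow> ('r \<Rightarrow> 'a list \<Rightarrow> bool) \<Rightarrow> (nat \<Rightarrow> 'a) \<Rightarrow> ('f, 'r) fm \<Rightarrow> bool" where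
  "SM_holds ar S Fi I \<sigma> F =
     (eval Fi I \<sigma> F \<and> \<not> (\<exists>U. pred_less ar S U I \<and> eval Fi (case_sum I U) \<sigma> (dia S F)))"

end

theory Submission
  imports Defs
begin

lemma teval_cong: "(\<forall>v\<in>fv_trm t. \<sigma> v = \<sigma>' v) \<Longrightarrow> teval Fi \<sigma> t = teval Fi \<sigma>' t"
proof (induction t)
  case (Fn f ts)
  have "map (teval Fi \<sigma>) ts = map (teval Fi \<sigma>') ts"
  proof (rule map_cong[OF refl])
    fix t assume "t \<in> set ts"
    then show "teval Fi \<sigma> t = teval Fi \<sigma>' t" using Fn.IH Fn.prems by auto
  qed
  then show ?case by (simp only: teval.simps)
qed simp

lemma eval_cong: "(\<forall>v\<in>fv F. \<sigma> v = \<sigma>' v) \<Longrightarrow> eval Fi I \<sigma> F = eval Fi I \<sigma>' F"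
proof (induction F arbitrary: \<sigma> \<sigma>')
  case (Atom r ts)
  then show ?case by (auto intro!: arg_cong[where f="I r"] map_cong teval_cong)
next
  case (Eq s t)
  then show ?case using teval_cong[of s \<sigma> \<sigma>' Fi] teval_cong[of t \<sigma> \<sigma>' Fi] by auto
next
  case (Forall x F)
  have "\<And>d. eval Fi I (\<sigma>(x:=d)) F = eval Fi I (\<sigma>'(x:=d)) F"
    by (rule Forall.IH) (use Forall.prems in auto)
  then show ?case by simp
next
  case (Exists x F)
  have "\<And>d. eval Fi I (\<sigma>(x:=d)) F = eval Fi I (\<sigma>'(x:=d)) F"
    by (rule Exists.IH) (use Exists.prems in auto)
  then show ?case by simp
qed (auto simp: ball_Un)

lemma eval_foralls:
  "eval Fi I \<sigma> (foralls xs F) \<longleftrightarrow> (\<forall>\<sigma>'. (\<forall>v. v \<notin> set xs \<longrightarrow> \<sigma>' v = \<sigma> v) \<longrightarrow> eval Fi I \<sigma>' F)"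
proof (induction xs arbitrary: \<sigma>)
  case Nil
  then show ?case by (auto simp: foralls_def)
next
  case (Cons x xs)
  have e: "eval Fi I \<sigma> (foralls (x # xs) F) = (\<forall>d. eval Fi I (\<sigma>(x:=d)) (foralls xs F))"
    by (simp add: foralls_def)
  show ?case unfolding e Cons.IH
  proof (intro iffI allI impI)
    fix \<sigma>' assume H: "\<forall>d \<sigma>'. (\<forall>v. v \<notin> set xs \<longrightarrow> \<sigma>' v = (\<sigma>(x := d)) v) \<longrightarrow> eval Fi I \<sigma>' F"
      and A: "\<forall>v. v \<notin> set (x # xs) \<longrightarrow> \<sigma>' v = \<sigma> v"
    have "\<forall>v. v \<notin> set xs \<longrightarrow> \<sigma>' v = (\<sigma>(x := \<sigma>' x)) v" using A by auto
    then show "eval Fi I \<sigma>' F" using H by blast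
  next
    fix d \<sigma>' assume H: "\<forall>\<sigma>'. (\<forall>v. v \<notin> set (x # xs) \<longrightarrow> \<sigma>' v = \<sigma> v) \<longrightarrow> eval Fi I \<sigma>' F"
      and A: "\<forall>v. v \<notin> set xs \<longrightarrow> \<sigma>' v = (\<sigma>(x := d)) v"
    show "eval Fi I \<sigma>' F" using H[rule_format, of \<sigma>'] A by auto
  qed
qed

lemma finite_fv_trm: "finite (fv_trm t)"
  by (induction t) auto

lemma finite_fv: "finite (fv F)"
  by (induction F) (auto simp: finite_fv_trm)

lemma eval_ucl: "eval Fi I \<sigma> (ucl F) \<longleftrightarrow> (\<forall>\<sigma>'. eval Fi I \<sigma>' F)"
proof -
  have s: "set (sorted_list_of_set (fv F)) = fv F" by (simp add: finite_fv)
  show ?thesis unfolding ucl_def eval_foralls s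
  proof (intro iffI allI impI)
    fix \<sigma>' assume H: "\<forall>\<sigma>'. (\<forall>v. v \<notin> fv F \<longrightarrow> \<sigma>' v = \<sigma> v) \<longrightarrow> eval Fi I \<sigma>' F"
    define \<tau> where "\<tau> = (\<lambda>v. if v \<in> fv F then \<sigma>' v else \<sigma> v)"
    have "eval Fi I \<tau> F" using H \<tau>_def by auto
    moreover have "eval Fi I \<tau> F = eval Fi I \<sigma>' F" by (rule eval_cong) (auto simp: \<tau>_def)
    ultimately show "eval Fi I \<sigma>' F" by simp
  qed auto
qed

lemma eval_conjs: "eval Fi I \<sigma> (conjs Fs) \<longleftrightarrow> (\<forall>F\<in>set Fs. eval Fi I \<sigma> F)"
  by (induction Fs rule: conjs.induct) auto

lemma eval_disjs: "eval Fi I \<sigma> (disjs Fs) \<longleftrightarrow> (\<exists>F\<in>set Fs. eval Fi I \<sigma> F)"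
  by (induction Fs rule: disjs.induct) auto

lemma eval_rename: "eval Fi I \<sigma> (rename_pred g F) = eval Fi (I \<circ> g) \<sigma> F"
  by (induction F arbitrary: \<sigma>) auto

lemma fv_rename: "fv (rename_pred g F) = fv F"
  by (induction F) auto

lemma fv_dia: "fv (dia S F) = fv F"
  by (induction F) (auto simp: fv_rename)

lemma dia_conjs: "dia S (conjs Fs) = conjs (map (dia S) Fs)"
  by (induction Fs rule: conjs.induct) auto

lemma dia_disjs: "dia S (disjs Fs) = disjs (map (dia S) Fs)"
  by (induction Fs rule: disjs.induct) auto

lemma dia_foldr: "dia S (foldr Forall xs F) = foldr Forall xs (dia S F)"
  by (induction xs) auto

lemma dia_ucl: "dia S (ucl F) = ucl (dia S F)"
  by (simp add: ucl_def foralls_def dia_foldr fv_dia)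

lemma case_sum_o_Inl: "case_sum I U \<circ> Inl = I"
  by (rule ext) simp

lemma tr_d_sem:
  "eval Fi I \<sigma> (tr_d (Pos, Ng, G)) \<longleftrightarrow> (\<forall>\<sigma>'. eval Fi (I \<circ> Orig) \<sigma>' G \<longrightarrow>
     (\<exists>a\<in>set Pos. I (Orig (fst a)) (map (teval Fi \<sigma>') (snd a))) \<or>
     (\<exists>a\<in>set Ng. I (Hat (fst a)) (map (teval Fi \<sigma>') (snd a))))"
  by (simp add: tr_d_def eval_ucl eval_conjs eval_disjs eval_rename hatm_def oatm_def ball_Un bex_Un)

lemma dia_tr_d_sem:
  assumes "\<And>a. a \<in> set Pos \<union> set Ng \<Longrightarrow> fst a \<in> set ps"
  shows "eval Fi (case_sum I U) \<sigma> (dia (Orig ` set ps \<union> Hat ` set ps) (tr_d (Pos, Ng, G))) \<longleftrightarrow>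
    (\<forall>\<sigma>'. eval Fi (I \<circ> Orig) \<sigma>' G \<and>
      (\<forall>a\<in>set Pos. U (Hat (fst a)) (map (teval Fi \<sigma>') (snd a)) \<or> \<not> I (Hat (fst a)) (map (teval Fi \<sigma>') (snd a))) \<and>
      (\<forall>a\<in>set Ng. U (Orig (fst a)) (map (teval Fi \<sigma>') (snd a)) \<or> \<not> I (Orig (fst a)) (map (teval Fi \<sigma>') (snd a)))
     \<longrightarrow> (\<exists>a\<in>set Pos. U (Orig (fst a)) (map (teval Fi \<sigma>') (snd a))) \<or>
        (\<exists>a\<in>set Ng. U (Hat (fst a)) (map (teval Fi \<sigma>') (snd a))))"
  using assms
  by (simp add: tr_d_def dia_ucl dia_conjs dia_disjs eval_ucl eval_conjs eval_disjs eval_rename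
      hatm_def oatm_def ball_Un bex_Un case_sum_o_Inl comp_assoc[symmetric] cong: rev_conj_cong)

lemma crule_sem:
  assumes "\<And>a. a \<in> set Pos \<union> set Ng \<Longrightarrow> fst a \<in> set ps"
  shows "eval Fi (case_sum J U) \<sigma> ((\<lambda>(F, G). ucl (Imp (rename_pred Inl G)
       (rename_pred (\<lambda>r. if r \<in> set ps then Inr r else Inl r) F))) (drule_crule (Pos, Ng, G)))
    \<longleftrightarrow> (\<forall>\<sigma>'. eval Fi J \<sigma>' G \<longrightarrow>
       (\<exists>a\<in>set Pos. U (fst a) (map (teval Fi \<sigma>') (snd a))) \<or>
       (\<exists>a\<in>set Ng. \<not> U (fst a) (map (teval Fi \<sigma>') (snd a))))"
  using assms
  by (simp add: drule_crule_def eval_ucl eval_rename eval_disjs atom_fm_def bex_Un case_sum_o_Inl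
      cong: rev_conj_cong)

lemma Tdag_sem:
  assumes "\<forall>r\<in>set R. is_drule ps ar r"
  shows "eval Fi (case_sum J U) \<sigma> (Tdag ps (map drule_crule R)) \<longleftrightarrow>
    (\<forall>r\<in>set R. case r of (Pos, Ng, G) \<Rightarrow> (\<forall>\<sigma>'. eval Fi J \<sigma>' G \<longrightarrow>
       (\<exists>a\<in>set Pos. U (fst a) (map (teval Fi \<sigma>') (snd a))) \<or>
       (\<exists>a\<in>set Ng. \<not> U (fst a) (map (teval Fi \<sigma>') (snd a)))))"
proof -
  have "eval Fi (case_sum J U) \<sigma> ((\<lambda>(F, G). ucl (Imp (rename_pred Inl G)
       (rename_pred (\<lambda>r. if r \<in> set ps then Inr r else Inl r) F))) (drule_crule r)) \<longleftrightarrow>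
     (case r of (Pos, Ng, G) \<Rightarrow> (\<forall>\<sigma>'. eval Fi J \<sigma>' G \<longrightarrow>
       (\<exists>a\<in>set Pos. U (fst a) (map (teval Fi \<sigma>') (snd a))) \<or>
       (\<exists>a\<in>set Ng. \<not> U (fst a) (map (teval Fi \<sigma>') (snd a)))))"
    if "r \<in> set R" for r
  proof -
    obtain Pos Ng G where r: "r = (Pos, Ng, G)" by (cases r) auto
    have "\<And>a. a \<in> set Pos \<union> set Ng \<Longrightarrow> fst a \<in> set ps"
      using assms that r by (auto simp: is_drule_def)
    from crule_sem[OF this] show ?thesis by (simp add: r)
  qed
  then show ?thesis by (simp add: Tdag_def eval_conjs)
qed

lemma CC_sem:
  assumes "eval Fi I \<sigma> (CC ar ps)" "p \<in> set ps" "length xs = ar p"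
  shows "I (Hat p) xs \<longleftrightarrow> \<not> I (Orig p) xs"
proof -
  have "eval Fi I \<sigma> (cc_pred ar p)" using assms by (simp add: CC_def eval_conjs)
  define \<tau> where "\<tau> = (\<lambda>i. if i < ar p then xs ! i else \<sigma> i)"
  have m: "map (teval Fi \<tau>) (map Var [0..<ar p]) = xs"
    using assms(3) by (auto simp: \<tau>_def intro!: nth_equalityI)
  have ag: "\<forall>v. v \<notin> set [0..<ar p] \<longrightarrow> \<tau> v = \<sigma> v" by (simp add: \<tau>_def)
  from \<open>eval Fi I \<sigma> (cc_pred ar p)\<close> have
    "eval Fi I \<tau> (Neg (Conj (Atom (Orig p) (map Var [0..<ar p])) (Atom (Hat p) (map Var [0..<ar p]))))"
    "eval Fi I \<tau> (Neg (Conj (Neg (Atom (Orig p) (map Var [0..<ar p]))) (Neg (Atom (Hat p) (map Var [0..<ar p])))))"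
    unfolding cc_pred_def Let_def eval.simps(5) eval_foralls using ag by blast+
  then show ?thesis by (simp only: eval.simps m) blast
qed

theorem lemma8:
  fixes ps :: "'p list" and ar :: "'p \<Rightarrow> nat" and R :: "('f, 'p) drule list"
    and Fi :: "'f \<Rightarrow> 'a list \<Rightarrow> 'a" and I :: "'p hsym \<Rightarrow> 'a list \<Rightarrow> bool"
    and \<sigma> :: "nat \<Rightarrow> 'a"
  assumes "distinct ps"
    and "\<forall>r \<in> set R. is_drule ps ar r"
    and "causal_holds ar ps (map drule_crule R) Fi (I \<circ> Orig) \<sigma>"
    and "eval Fi I \<sigma> (CC ar ps)"
  shows "SM_holds (har ar) (Orig ` set ps \<union> Hat ` set ps) Fi I \<sigma> (Conj (Pi R) (CC ar ps))"
proof -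
  let ?S = "Orig ` set ps \<union> Hat ` set ps"
  let ?J = "I \<circ> Orig"
  let ?args = "\<lambda>\<sigma>' (a :: ('f, 'p) atm). map (teval Fi \<sigma>') (snd a)"
  have cc: "I (Hat p) xs \<longleftrightarrow> \<not> I (Orig p) xs" if "p \<in> set ps" "length xs = ar p" for p xs
    using CC_sem[OF assms(4) that] .
  have dr: "fst a \<in> set ps \<and> length (snd a) = ar (fst a)"
    if "(Pos, Ng, G) \<in> set R" "a \<in> set Pos \<union> set Ng" for Pos Ng G a
    using assms(2) that by (auto simp: is_drule_def)
  have caus: "\<And>U. eval Fi (case_sum ?J U) \<sigma> (Tdag ps (map drule_crule R)) \<longleftrightarrow> pred_eq ar (set ps) U ?J"
    using assms(3) by (simp add: causal_holds_def)
  have "eval Fi (case_sum ?J ?J) \<sigma> (Tdag ps (map drule_crule R))"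
    using caus by (simp add: pred_eq_def)
  hence T1: "\<forall>r\<in>set R. case r of (Pos, Ng, G) \<Rightarrow> (\<forall>\<sigma>'. eval Fi ?J \<sigma>' G \<longrightarrow>
       (\<exists>a\<in>set Pos. ?J (fst a) (?args \<sigma>' a)) \<or>
       (\<exists>a\<in>set Ng. \<not> ?J (fst a) (?args \<sigma>' a)))"
    using Tdag_sem[OF assms(2)] by blast
  have Pi1: "eval Fi I \<sigma> (Pi R)"
    unfolding Pi_def eval_conjs
  proof
    fix F assume "F \<in> set (map tr_d R)"
    then obtain Pos Ng G where r: "(Pos, Ng, G) \<in> set R" and F: "F = tr_d (Pos, Ng, G)" by auto
    show "eval Fi I \<sigma> F" unfolding F tr_d_sem
    proof (intro allI impI)
      fix \<sigma>' assume "eval Fi (I \<circ> Orig) \<sigma>' G"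
      with T1 r have "(\<exists>a\<in>set Pos. ?J (fst a) (?args \<sigma>' a)) \<or>
         (\<exists>a\<in>set Ng. \<not> ?J (fst a) (?args \<sigma>' a))" by fastforce
      then show "(\<exists>a\<in>set Pos. I (Orig (fst a)) (?args \<sigma>' a)) \<or>
         (\<exists>a\<in>set Ng. I (Hat (fst a)) (?args \<sigma>' a))"
        using cc dr[OF r] by auto
    qed
  qed
  have no: False if less: "pred_less (har ar) ?S U I"
      and ev: "eval Fi (case_sum I U) \<sigma> (dia ?S (Conj (Pi R) (CC ar ps)))" for U
  proof -
    have le: "U r xs \<Longrightarrow> I r xs" if "r \<in> ?S" "length xs = har ar r" for r xs
      using less that by (auto simp: pred_less_def pred_le_def)
    have leO: "U (Orig p) xs \<Longrightarrow> I (Orig p) xs" if "p \<in> set ps" "length xs = ar p" for p xs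
      using le[of "Orig p" xs] that by (auto simp: har_def)
    have leH: "U (Hat p) xs \<Longrightarrow> I (Hat p) xs" if "p \<in> set ps" "length xs = ar p" for p xs
      using le[of "Hat p" xs] that by (auto simp: har_def)
    have evP: "eval Fi (case_sum I U) \<sigma> (dia ?S (tr_d r))" if "r \<in> set R" for r
      using ev that by (simp add: Pi_def dia_conjs eval_conjs)
    define V where "V = (\<lambda>p xs. U (Orig p) xs \<or> (\<not> I (Orig p) xs \<and> \<not> U (Hat p) xs))"
    have "\<forall>r\<in>set R. case r of (Pos, Ng, G) \<Rightarrow> (\<forall>\<sigma>'. eval Fi ?J \<sigma>' G \<longrightarrow>
       (\<exists>a\<in>set Pos. V (fst a) (?args \<sigma>' a)) \<or>
       (\<exists>a\<in>set Ng. \<not> V (fst a) (?args \<sigma>' a)))"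
    proof
      fix r assume rR: "r \<in> set R"
      obtain Pos Ng G where r: "r = (Pos, Ng, G)" by (cases r) auto
      have rR': "(Pos, Ng, G) \<in> set R" using rR r by simp
      have H: "\<forall>\<sigma>'. eval Fi (I \<circ> Orig) \<sigma>' G \<and>
      (\<forall>a\<in>set Pos. U (Hat (fst a)) (?args \<sigma>' a) \<or> \<not> I (Hat (fst a)) (?args \<sigma>' a)) \<and>
      (\<forall>a\<in>set Ng. U (Orig (fst a)) (?args \<sigma>' a) \<or> \<not> I (Orig (fst a)) (?args \<sigma>' a))
     \<longrightarrow> (\<exists>a\<in>set Pos. U (Orig (fst a)) (?args \<sigma>' a)) \<or>
        (\<exists>a\<in>set Ng. U (Hat (fst a)) (?args \<sigma>' a))"
        using evP[OF rR] dia_tr_d_sem[of Pos Ng ps Fi I U \<sigma> G] dr[OF rR'] r by auto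
      show "case r of (Pos, Ng, G) \<Rightarrow> (\<forall>\<sigma>'. eval Fi ?J \<sigma>' G \<longrightarrow>
       (\<exists>a\<in>set Pos. V (fst a) (?args \<sigma>' a)) \<or>
       (\<exists>a\<in>set Ng. \<not> V (fst a) (?args \<sigma>' a)))"
        unfolding r prod.case
      proof (intro allI impI)
        fix \<sigma>' assume G: "eval Fi ?J \<sigma>' G"
        show "(\<exists>a\<in>set Pos. V (fst a) (?args \<sigma>' a)) \<or> (\<exists>a\<in>set Ng. \<not> V (fst a) (?args \<sigma>' a))"
        proof (rule ccontr)
          assume C: "\<not> ?thesis"
          have P1: "\<forall>a\<in>set Pos. U (Hat (fst a)) (?args \<sigma>' a) \<or> \<not> I (Hat (fst a)) (?args \<sigma>' a)"
            using C cc dr[OF rR'] unfolding V_def by fastforce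
          have P2: "\<forall>a\<in>set Ng. U (Orig (fst a)) (?args \<sigma>' a) \<or> \<not> I (Orig (fst a)) (?args \<sigma>' a)"
            using C unfolding V_def by fastforce
          from H G P1 P2 have "(\<exists>a\<in>set Pos. U (Orig (fst a)) (?args \<sigma>' a)) \<or>
              (\<exists>a\<in>set Ng. U (Hat (fst a)) (?args \<sigma>' a))" by blast
          then show False
          proof
            assume "\<exists>a\<in>set Pos. U (Orig (fst a)) (?args \<sigma>' a)"
            then show False using C unfolding V_def by blast
          next
            assume "\<exists>a\<in>set Ng. U (Hat (fst a)) (?args \<sigma>' a)"
            then obtain a where a: "a \<in> set Ng" "U (Hat (fst a)) (?args \<sigma>' a)" by blast
            have d: "fst a \<in> set ps" "length (?args \<sigma>' a) = ar (fst a)" using dr[OF rR'] a(1) by auto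
            have "V (fst a) (?args \<sigma>' a)" using C a(1) by blast
            then have "I (Orig (fst a)) (?args \<sigma>' a)" using a(2) leO[OF d] unfolding V_def by blast
            moreover have "I (Hat (fst a)) (?args \<sigma>' a)" using leH[OF d] a(2) by blast
            ultimately show False using cc[OF d] by blast
          qed
        qed
      qed
    qed
    then have "eval Fi (case_sum ?J V) \<sigma> (Tdag ps (map drule_crule R))"
      using Tdag_sem[OF assms(2)] by blast
    then have eqV: "pred_eq ar (set ps) V ?J" using caus by blast
    have "pred_le (har ar) ?S I U"
      unfolding pred_le_def
    proof (intro ballI allI impI)
      fix r xs assume rS: "r \<in> ?S" and len: "length xs = har ar r" and Ir: "I r xs"
      show "U r xs"
      proof (cases r)
        case (Orig p)
        then have p: "p \<in> set ps" "length xs = ar p" using rS len by (auto simp: har_def)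
        then have "V p xs" using eqV Ir Orig by (auto simp: pred_eq_def)
        then show ?thesis using Ir Orig unfolding V_def by blast
      next
        case (Hat p)
        then have p: "p \<in> set ps" "length xs = ar p" using rS len by (auto simp: har_def)
        then have "\<not> I (Orig p) xs" using cc Ir Hat by blast
        then have "\<not> V p xs" using eqV p by (auto simp: pred_eq_def)
        then show ?thesis using Hat \<open>\<not> I (Orig p) xs\<close> unfolding V_def by blast
      qed
    qed
    then show False using less by (simp add: pred_less_def)
  qed
  show ?thesis unfolding SM_holds_def using Pi1 assms(4) no by auto
qed

end
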